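(* Let $M=(E,r)$ be a polymatroid, fix a total order on $E$, and let $t\ge0$ be an integer. For each base $f$ of $M$ let $A(f)\subseteq E$ be the set of elements internally active with respect to $f$. Then the sets $\big(f+t\nabla_{A(f)}\big)\cap\mathbb Z^E$, for $f$ ranging over the bases of $M$, are pairwise disjoint and their union is $(P(M)+t\nabla)\cap\mathbb Z^E$. Here $f+t\nabla_{A(f)}$ has dimension $|A(f)|-1=|E|-1-\bar\iota(f)$, where $\bar\iota(f)=|E\setminus A(f)|$.
   Context: A polymatroid $M=(E,r)$ is a function $r:2^E\to\mathbb Z_{\ge0}$ with $r(\emptyset)=0$, $r$ monotone, and $r(X\cup Y)+r(X\cap Y)\le r(X)+r(Y)$. Its bases are the $\mathbf x\in\mathbb Z^E$ with $\sum_{i\in E}x_i=r(E)$ and $\sum_{i\in S}x_i\le r(S)$ for all $S$; $P(M)$ is their convex hull. For nonempty $S\subseteq E$, $\nabla_S=\operatorname{conv}\{-\mathbf e_i:i\in S\}$ and $\nabla=\nabla_E$. A transfer from $u_1$ to $u_2$ is possible in a base $f$ if $f-\mathbf e_{u_1}+\mathbf e_{u_2}$ is again a base. An element $u$ is internally active with respect to $f$ if no transfer is possible in $f$ from $u$ to a smaller element of $E$ (in particular, the smallest element and every $u$ with $f_u=0$ are internally active). *)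

theory Defs
  imports "HOL-Analysis.Analysis"
begin

text \<open>Ground set E is the finite type 'a (E = UNIV), totally ordered by its linorder.
  Integer points of Z^E are int ^ 'a, real points are real ^ 'a.\<close>

definition polymatroid :: "('a::finite set \<Rightarrow> int) \<Rightarrow> bool" where
  "polymatroid r \<longleftrightarrow> r {} = 0 \<and> (\<forall>X. 0 \<le> r X) \<and> (\<forall>X Y. X \<subseteq> Y \<longrightarrow> r X \<le> r Y)
     \<and> (\<forall>X Y. r (X \<union> Y) + r (X \<inter> Y) \<le> r X + r Y)"

definition is_base :: "('a::finite set \<Rightarrow> int) \<Rightarrow> int ^ 'a \<Rightarrow> bool" where
  "is_base r x \<longleftrightarrow> (\<Sum>i\<in>UNIV. x $ i) = r UNIV \<and> (\<forall>S. (\<Sum>i\<in>S. x $ i) \<le> r S)"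

definition real_vec :: "int ^ 'a \<Rightarrow> real ^ 'a" where
  "real_vec x = (\<chi> i. real_of_int (x $ i))"

definition base_polytope :: "('a::finite set \<Rightarrow> int) \<Rightarrow> (real ^ 'a) set" where
  "base_polytope r = convex hull (real_vec ` {x. is_base r x})"

definition nabla :: "'a::finite set \<Rightarrow> (real ^ 'a) set" where
  "nabla S = convex hull ((\<lambda>i. - axis i 1) ` S)"

definition transfer_possible :: "('a::finite set \<Rightarrow> int) \<Rightarrow> int ^ 'a \<Rightarrow> 'a \<Rightarrow> 'a \<Rightarrow> bool" where
  "transfer_possible r f u1 u2 \<longleftrightarrow> is_base r (f - axis u1 1 + axis u2 1)"

definition internally_active :: "('a set \<Rightarrow> int) \<Rightarrow> int ^ ('a::{finite,linorder}) \<Rightarrow> 'a \<Rightarrow> bool" where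
  "internally_active r f u \<longleftrightarrow> \<not> (\<exists>v. v < u \<and> transfer_possible r f u v)"

definition active_set :: "('a set \<Rightarrow> int) \<Rightarrow> int ^ ('a::{finite,linorder}) \<Rightarrow> 'a set" where
  "active_set r f = {u. internally_active r f u}"

end

theory Submission
  imports Defs
begin

definition feas :: "('a::finite set \<Rightarrow> int) \<Rightarrow> int ^ 'a \<Rightarrow> bool" where
  "feas r y \<longleftrightarrow> (\<forall>S. (\<Sum>i\<in>S. y $ i) \<le> r S)"

definition tight :: "('a::finite set \<Rightarrow> int) \<Rightarrow> int ^ 'a \<Rightarrow> 'a set \<Rightarrow> bool" where
  "tight r y S \<longleftrightarrow> (\<Sum>i\<in>S. y $ i) = r S"

lemma tight_un_int:
  assumes P: "polymatroid r" and F: "feas r y" and A: "tight r y A" and B: "tight r y B"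
  shows "tight r y (A \<union> B) \<and> tight r y (A \<inter> B)"
proof -
  have sub: "r (A \<union> B) + r (A \<inter> B) \<le> r A + r B" using P unfolding polymatroid_def by blast
  have su: "(\<Sum>i\<in>A \<union> B. y$i) + (\<Sum>i\<in>A \<inter> B. y$i) = (\<Sum>i\<in>A. y$i) + (\<Sum>i\<in>B. y$i)"
    by (rule sum.union_inter) auto
  have "(\<Sum>i\<in>A \<union> B. y$i) \<le> r (A \<union> B)" "(\<Sum>i\<in>A \<inter> B. y$i) \<le> r (A \<inter> B)" using F unfolding feas_def by auto
  then show ?thesis using sub su A B unfolding tight_def by linarith
qed

lemma tight_family:
  assumes P: "polymatroid r" and F: "feas r y" and fin: "finite Fam" and ne: "Fam \<noteq> {}" and T: "\<forall>S\<in>Fam. tight r y S"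
  shows "tight r y (\<Inter>Fam) \<and> tight r y (\<Union>Fam)"
  using fin ne T
proof (induction Fam rule: finite_ne_induct)
  case (singleton x) then show ?case by simp
next
  case (insert x F)
  then show ?case using tight_un_int[OF P F] by simp
qed

lemma comp_tr: "(f - axis u 1 + axis v 1) $ j = f $ j - (if j = u then 1 else 0) + (if j = v then (1::int) else 0)"
  by (simp add: axis_def)

lemma comp_add: "(f + axis v 1) $ j = f $ j + (if j = v then (1::int) else 0)"
  by (simp add: axis_def)

lemma sum_delta_int: fixes S :: "'a::finite set" shows "(\<Sum>j\<in>S. c j * (if j = u then 1 else 0)) = (if u \<in> S then c u else (0::int))"
proof -
  have "(\<Sum>j\<in>S. c j * (if j = u then 1 else 0)) = (\<Sum>j\<in>S. if j = u then c j else 0)"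
    by (rule sum.cong) auto
  then show ?thesis by (simp add: sum.delta)
qed

lemma sum_tr: "(\<Sum>j\<in>S. c j * (f - axis u 1 + axis v 1) $ j) =
   (\<Sum>j\<in>S. c j * f $ j) - (if u \<in> S then c u else 0) + (if v \<in> S then c v else (0::int))"
proof -
  have "(\<Sum>j\<in>S. c j * (f - axis u 1 + axis v 1) $ j) = (\<Sum>j\<in>S. c j * f $ j - c j * (if j = u then 1 else 0) + c j * (if j = v then 1 else 0))"
    by (rule sum.cong) (auto simp: axis_def algebra_simps)
  also have "\<dots> = (\<Sum>j\<in>S. c j * f $ j) - (\<Sum>j\<in>S. c j * (if j = u then 1 else 0)) + (\<Sum>j\<in>S. c j * (if j = v then 1 else 0))"
    by (simp only: sum.distrib sum_subtractf)
  finally show ?thesis by (simp only: sum_delta_int)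
qed

lemma sum_tr1: "(\<Sum>j\<in>S. (f - axis u 1 + axis v 1) $ j) =
   (\<Sum>j\<in>S. f $ j) - (if u \<in> S then 1 else 0) + (if v \<in> S then 1 else (0::int))"
  using sum_tr[where c="\<lambda>_. 1" and S=S and f=f and u=u and v=v] by simp

lemma sum_add1: "(\<Sum>j\<in>S. (f + axis v 1) $ j) = (\<Sum>j\<in>S. f $ j) + (if v \<in> S then 1 else (0::int))"
proof -
  have "(\<Sum>j\<in>S. (f + axis v 1) $ j) = (\<Sum>j\<in>S. f $ j + (if j = v then 1 else 0))"
    by (rule sum.cong) (auto simp: axis_def)
  also have "\<dots> = (\<Sum>j\<in>S. f $ j) + (\<Sum>j\<in>S. 1 * (if j = v then 1 else 0))"
    by (simp only: sum.distrib mult_1)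
  finally show ?thesis by (simp only: sum_delta_int)
qed

lemma exchange:
  assumes P: "polymatroid r" and g: "is_base r g" and f: "is_base r f" and u: "g$u < f$u"
  shows "\<exists>v. f$v < g$v \<and> is_base r (g - axis v 1 + axis u 1)"
proof (rule ccontr)
  assume N: "\<not> ?thesis"
  have Fg: "feas r g" using g by (simp add: is_base_def feas_def)
  define V where "V = {v. f$v < g$v}"
  have "\<forall>v\<in>V. \<exists>S. u \<in> S \<and> v \<notin> S \<and> tight r g S"
  proof
    fix v assume vV: "v\<in>V"
    then have nb: "\<not> is_base r (g - axis v 1 + axis u 1)" using N V_def by auto
    have vu: "v \<noteq> u" using vV u V_def by auto
    have sumU: "(\<Sum>i\<in>UNIV. (g - axis v 1 + axis u 1) $ i) = r UNIV" using g sum_tr1[where S=UNIV and f=g and u=v and v=u]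
      by (simp add: is_base_def)
    then obtain S where S: "(\<Sum>i\<in>S. (g - axis v 1 + axis u 1) $ i) > r S"
      using nb unfolding is_base_def by (auto simp: not_le)
    have le: "(\<Sum>i\<in>S. g $ i) \<le> r S" using Fg by (simp add: feas_def)
    show "\<exists>S. u \<in> S \<and> v \<notin> S \<and> tight r g S"
      using S le sum_tr1[where S=S and f=g and u=v and v=u] unfolding tight_def
      by (intro exI[of _ S]) (auto split: if_splits)
  qed
  then obtain Sf where Sf: "\<forall>v\<in>V. u \<in> Sf v \<and> v \<notin> Sf v \<and> tight r g (Sf v)" by metis
  define T where "T = \<Inter> (insert UNIV (Sf ` V))"
  have "tight r g UNIV" using g by (simp add: is_base_def tight_def)
  then have tT: "tight r g T" unfolding T_def using tight_family[OF P Fg, of "insert UNIV (Sf ` V)"] Sf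
    by auto
  have uT: "u \<in> T" unfolding T_def using Sf by auto
  have leT: "\<forall>i\<in>T. g$i \<le> f$i"
  proof
    fix i assume "i \<in> T"
    show "g$i \<le> f$i"
    proof (rule ccontr)
      assume "\<not> g$i \<le> f$i"
      then have "i \<in> V" by (auto simp: V_def)
      then have "i \<notin> T" unfolding T_def using Sf by auto
      then show False using \<open>i \<in> T\<close> by simp
    qed
  qed
  have "(\<Sum>i\<in>T. g$i) < (\<Sum>i\<in>T. f$i)"
    by (rule sum_strict_mono_ex1) (use leT uT u in auto)
  moreover have "(\<Sum>i\<in>T. f$i) \<le> r T" using f by (simp add: is_base_def)
  ultimately show False using tT by (simp add: tight_def)
qed

lemma greedy:
  assumes P: "polymatroid r"
  shows "\<forall>y. feas r y \<and> (\<Sum>i\<in>UNIV. y$i) = r UNIV - int n \<longrightarrow> (\<exists>f. is_base r f \<and> (\<forall>i. y$i \<le> f$i))"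
proof (induction n)
  case 0
  then show ?case by (auto simp: is_base_def feas_def)
next
  case (Suc n)
  show ?case
  proof (intro allI impI)
    fix y assume y: "feas r y \<and> (\<Sum>i\<in>UNIV. y$i) = r UNIV - int (Suc n)"
    have "\<exists>i. feas r (y + axis i 1)"
    proof (rule ccontr)
      assume N: "\<not> ?thesis"
      have "\<forall>i. \<exists>S. i \<in> S \<and> tight r y S"
      proof
        fix i
        obtain S where S: "(\<Sum>j\<in>S. (y + axis i 1) $ j) > r S" using N by (auto simp: feas_def not_le)
        have "(\<Sum>j\<in>S. y $ j) \<le> r S" using y by (simp add: feas_def)
        then show "\<exists>S. i \<in> S \<and> tight r y S" using S sum_add1[where S=S and f=y and v=i] unfolding tight_def
          by (intro exI[of _ S]) (auto split: if_splits)
      qed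
      then obtain Sf where Sf: "\<forall>i. i \<in> Sf i \<and> tight r y (Sf i)" by metis
      have "tight r y (\<Union>(range Sf))" using tight_family[OF P, of y "range Sf"] y Sf by auto
      moreover have "\<Union>(range Sf) = UNIV" using Sf by auto
      ultimately show False using y by (simp add: tight_def)
    qed
    then obtain i where i: "feas r (y + axis i 1)" by blast
    have "(\<Sum>j\<in>UNIV. (y + axis i 1) $ j) = r UNIV - int n" using y sum_add1[where S=UNIV and f=y and v=i] by simp
    then obtain f where f: "is_base r f" "\<forall>j. (y + axis i 1) $ j \<le> f $ j" using Suc.IH i by blast
    have "\<forall>j. y $ j \<le> f $ j"
    proof
      fix j show "y $ j \<le> f $ j" using f(2)[rule_format, of j] comp_add[of y i j] by (auto split: if_splits)
    qed
    then show "\<exists>f. is_base r f \<and> (\<forall>i. y$i \<le> f$i)" using f(1) by blast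
  qed
qed

definition good where
  "good r x f \<longleftrightarrow> is_base r f \<and> (\<forall>i. x$i \<le> f$i) \<and> (\<forall>i. x$i < f$i \<longrightarrow> i \<in> active_set r f)"

lemma good_core:
  assumes P: "polymatroid r" and f: "good r x f" and g: "good r x g" and m: "g$m < f$m"
    and lt: "\<forall>j. j < m \<longrightarrow> f$j = g$j"
  shows False
proof -
  obtain v where v: "f$v < g$v" "is_base r (g - axis v 1 + axis m 1)"
    using exchange[OF P _ _ m] f g by (auto simp: good_def)
  have "v \<noteq> m" using v m by auto
  moreover have "\<not> v < m" using lt v by auto
  ultimately have mv: "m < v" by auto
  have "x$v \<le> f$v" using f by (simp add: good_def)
  then have "x$v < g$v" using v(1) by linarith
  then have "v \<in> active_set r g" using g by (auto simp: good_def)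
  then show False using mv v(2) by (auto simp: active_set_def internally_active_def transfer_possible_def)
qed

lemma good_unique:
  assumes P: "polymatroid r" and f: "good r x f" and g: "good r x g"
  shows "f = g"
proof (rule ccontr)
  assume "f \<noteq> g"
  then obtain j where "f$j \<noteq> g$j" by (auto simp: vec_eq_iff)
  define D where "D = {j. f$j \<noteq> g$j}"
  define m where "m = Min D"
  have "D \<noteq> {}" using \<open>f$j \<noteq> g$j\<close> D_def by auto
  then have mD: "m \<in> D" unfolding m_def by (rule Min_in[OF finite])
  have lt: "\<forall>j. j < m \<longrightarrow> f$j = g$j"
  proof (intro allI impI)
    fix j assume "j < m"
    show "f$j = g$j"
    proof (rule ccontr)
      assume "f$j \<noteq> g$j"
      then have "m \<le> j" unfolding m_def D_def by (intro Min_le) auto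
      then show False using \<open>j < m\<close> by simp
    qed
  qed
  show False
  proof (cases "g$m < f$m")
    case True
    show False by (rule good_core[OF P f g True lt])
  next
    case False
    then have "f$m < g$m" using mD D_def by auto
    then show False using good_core[OF P g f _ ] lt by metis
  qed
qed


lemma exists_good:
  fixes r :: "'a::{finite,linorder} set \<Rightarrow> int"
  assumes P: "polymatroid r" and F: "feas r x" and sx: "(\<Sum>i\<in>UNIV. x$i) = r UNIV - int t"
  shows "\<exists>f. good r x f"
proof -
  obtain f0 where f0: "is_base r f0" "\<forall>i. x$i \<le> f0$i" using greedy[OF P, of t] F sx by blast
  define w :: "'a \<Rightarrow> int" where "w i = int (card {j. i < j})" for i
  define Phi where "Phi f = (\<Sum>i\<in>UNIV. w i * f$i)" for f
  define Bd where "Bd = (\<Sum>i\<in>UNIV. w i * (x$i + int t))"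
  define B where "B f \<longleftrightarrow> is_base r f \<and> (\<forall>i. x$i \<le> f$i)" for f
  have bnd: "Phi f \<le> Bd" if "B f" for f
  proof -
    have "f$i \<le> x$i + int t" for i
    proof -
      have "(\<Sum>j\<in>UNIV. f$j - x$j) = int t" using that sx by (simp add: B_def is_base_def sum_subtractf)
      moreover have "f$i - x$i \<le> (\<Sum>j\<in>UNIV. f$j - x$j)"
        by (rule member_le_sum) (use that in \<open>auto simp: B_def\<close>)
      ultimately show ?thesis by simp
    qed
    then show ?thesis unfolding Phi_def Bd_def
      by (intro sum_mono mult_left_mono) (auto simp: w_def)
  qed
  obtain f where fB: "B f" and fmin: "\<forall>g. B g \<longrightarrow> nat (Bd - Phi f) \<le> nat (Bd - Phi g)"
    using ex_has_least_nat[of B f0 "\<lambda>f. nat (Bd - Phi f)"] f0 by (auto simp: B_def)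
  have fmax: "Phi g \<le> Phi f" if "B g" for g
    using fmin that bnd[OF that] bnd[OF fB] by fastforce
  have "i \<in> active_set r f" if xi: "x$i < f$i" for i
  proof (rule ccontr)
    assume "i \<notin> active_set r f"
    then obtain v where v: "v < i" "is_base r (f - axis i 1 + axis v 1)"
      by (auto simp: active_set_def internally_active_def transfer_possible_def)
    define g where "g = f - axis i 1 + axis v 1"
    have "B g"
    proof -
      have "x$j \<le> g$j" for j
      proof -
        have "x$j \<le> f$j" using fB by (simp add: B_def)
        then show ?thesis using xi v(1) comp_tr[of f i v j] unfolding g_def by (auto split: if_splits)
      qed
      then show ?thesis using v(2) by (simp add: B_def g_def)
    qed
    have "{j. i < j} \<subset> {j. v < j}" using v(1) by auto
    then have "w i < w v" unfolding w_def by (simp add: psubset_card_mono)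
    moreover have "Phi g = Phi f - w i + w v" unfolding Phi_def g_def using sum_tr[where c=w and S=UNIV and f=f and u=i and v=v] by simp
    ultimately show False using fmax[OF \<open>B g\<close>] by simp
  qed
  then show ?thesis using fB by (auto simp: good_def B_def)
qed

lemma nabla_char:
  fixes S :: "'a::finite set"
  shows "nabla S = {q. (\<forall>j. q$j \<le> 0) \<and> (\<forall>j. j \<notin> S \<longrightarrow> q$j = 0) \<and> (\<Sum>j\<in>UNIV. q$j) = -1}"
    (is "_ = ?C")
proof
  have ax: "(- axis i 1 :: real^'a) $ j = - (if j = i then 1 else 0)" for i j by (simp add: axis_def)
  have cvx: "convex ?C"
    unfolding convex_def
  proof (intro ballI allI impI, goal_cases)
    case (1 x y u v)
    have "(\<Sum>j\<in>UNIV. (u *\<^sub>R x + v *\<^sub>R y) $ j) = u * (\<Sum>j\<in>UNIV. x$j) + v * (\<Sum>j\<in>UNIV. y$j)"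
      by (simp add: sum.distrib sum_distrib_left)
    then show ?case using 1 by (auto intro!: add_nonpos_nonpos mult_nonneg_nonpos)
  qed
  show "nabla S \<subseteq> ?C" unfolding nabla_def
  proof (rule hull_minimal)
    show "convex ?C" by (rule cvx)
    show "(\<lambda>i. - axis i 1) ` S \<subseteq> ?C"
    proof
      fix z :: "real^'a" assume "z \<in> (\<lambda>i. - axis i 1) ` S"
      then obtain i where i: "i \<in> S" "z = - axis i 1" by auto
      have "(\<Sum>j\<in>UNIV. z$j) = - (\<Sum>j\<in>UNIV. if j = i then 1 else 0)" using i by (simp add: axis_def sum_negf)
      also have "\<dots> = -1" by simp
      finally show "z \<in> ?C" using i by (auto simp: axis_def)
    qed
  qed
  show "?C \<subseteq> nabla S"
  proof
    fix q :: "real^'a" assume q: "q \<in> ?C"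
    have eq: "q = (\<Sum>i\<in>S. (- q$i) *\<^sub>R (- axis i 1 :: real^'a))"
    proof (subst vec_eq_iff, intro allI)
      fix j
      have "(\<Sum>i\<in>S. (- q$i) *\<^sub>R (- axis i 1 :: real^'a)) $ j = (\<Sum>i\<in>S. if i = j then q$j else 0)"
        unfolding sum_component by (rule sum.cong) (auto simp: axis_def)
      also have "\<dots> = q$j" using q by auto
      finally show "q$j = (\<Sum>i\<in>S. (- q$i) *\<^sub>R (- axis i 1 :: real^'a)) $ j" by simp
    qed
    have "(\<Sum>i\<in>S. q$i) = (\<Sum>i\<in>UNIV. q$i)"
      by (rule sum.mono_neutral_left) (use q in auto)
    then have w1: "(\<Sum>i\<in>S. - q$i) = 1" using q by (simp add: sum_negf)
    have "(\<Sum>i\<in>S. (- q$i) *\<^sub>R (- axis i 1 :: real^'a)) \<in> nabla S"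
      unfolding nabla_def
      by (rule convex_sum[OF finite convex_convex_hull w1]) (use q in \<open>auto intro: hull_inc\<close>)
    then show "q \<in> nabla S" using eq by simp
  qed
qed

lemma bp_char:
  assumes "p \<in> base_polytope r"
  shows "(\<forall>S. (\<Sum>i\<in>S. p$i) \<le> real_of_int (r S)) \<and> (\<Sum>i\<in>UNIV. p$i) = real_of_int (r UNIV)"
proof -
  define C where "C = {p :: real^'a. (\<forall>S. (\<Sum>i\<in>S. p$i) \<le> real_of_int (r S)) \<and> (\<Sum>i\<in>UNIV. p$i) = real_of_int (r UNIV)}"
  have cvx: "convex C"
    unfolding convex_def
  proof (intro ballI allI impI, goal_cases)
    case (1 x y u v)
    have s: "(\<Sum>j\<in>S. (u *\<^sub>R x + v *\<^sub>R y) $ j) = u * (\<Sum>j\<in>S. x$j) + v * (\<Sum>j\<in>S. y$j)" for S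
      by (simp add: sum.distrib sum_distrib_left)
    have "(\<Sum>j\<in>S. (u *\<^sub>R x + v *\<^sub>R y) $ j) \<le> real_of_int (r S)" for S
    proof -
      have "u * (\<Sum>j\<in>S. x$j) \<le> u * real_of_int (r S)" "v * (\<Sum>j\<in>S. y$j) \<le> v * real_of_int (r S)"
        using 1 by (auto simp: C_def intro!: mult_left_mono)
      moreover have "u * real_of_int (r S) + v * real_of_int (r S) = real_of_int (r S)"
        using 1(5) by (metis distrib_right mult_1)
      ultimately show ?thesis using s[of S] by linarith
    qed
    moreover have "(\<Sum>j\<in>UNIV. (u *\<^sub>R x + v *\<^sub>R y) $ j) = real_of_int (r UNIV)"
    proof -
      have "u * real_of_int (r UNIV) + v * real_of_int (r UNIV) = real_of_int (r UNIV)"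
        using 1(5) by (metis distrib_right mult_1)
      then show ?thesis using s[of UNIV] 1(1,2) by (simp add: C_def)
    qed
    ultimately show ?case by (simp add: C_def)
  qed
  have "real_vec ` {x. is_base r x} \<subseteq> C"
    by (auto simp: C_def real_vec_def is_base_def simp flip: of_int_sum)
  then have "base_polytope r \<subseteq> C" unfolding base_polytope_def using cvx by (rule hull_minimal)
  then show ?thesis using assms by (auto simp: C_def)
qed

lemma real_vec_comp: "real_vec x $ i = real_of_int (x $ i)"
  by (simp add: real_vec_def)

lemma shift_D:
  fixes x f :: "int ^ 'a::finite"
  assumes q: "q \<in> nabla A" and e: "real_vec x = real_vec f + real t *\<^sub>R q"
  shows "(\<forall>i. x$i \<le> f$i) \<and> (\<forall>i. i \<notin> A \<longrightarrow> x$i = f$i) \<and> (\<Sum>i\<in>UNIV. x$i) = (\<Sum>i\<in>UNIV. f$i) - int t"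
proof -
  have qc: "(\<forall>j. q$j \<le> 0) \<and> (\<forall>j. j \<notin> A \<longrightarrow> q$j = 0) \<and> (\<Sum>j\<in>UNIV. q$j) = -1"
    using q nabla_char[of A] by auto
  have c: "real_of_int (x$i) = real_of_int (f$i) + real t * q$i" for i
    using arg_cong[OF e, of "\<lambda>v. v $ i"] by (simp add: real_vec_comp)
  have 1: "x$i \<le> f$i" for i
  proof -
    have "real t * q$i \<le> 0" using qc by (simp add: mult_nonneg_nonpos)
    then have "real_of_int (x$i) \<le> real_of_int (f$i)" using c[of i] by linarith
    then show ?thesis by simp
  qed
  have 2: "x$i = f$i" if "i \<notin> A" for i
    using c[of i] qc that by simp
  have "real_of_int (\<Sum>i\<in>UNIV. x$i) = (\<Sum>i\<in>UNIV. real_of_int (f$i) + real t * q$i)"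
    by (simp add: c)
  also have "\<dots> = real_of_int (\<Sum>i\<in>UNIV. f$i) + real t * (\<Sum>i\<in>UNIV. q$i)"
    by (simp add: sum.distrib sum_distrib_left)
  also have "\<dots> = real_of_int ((\<Sum>i\<in>UNIV. f$i) - int t)" using qc by simp
  finally have 3: "(\<Sum>i\<in>UNIV. x$i) = (\<Sum>i\<in>UNIV. f$i) - int t" by (simp only: of_int_eq_iff)
  show ?thesis using 1 2 3 by blast
qed

lemma shift_I:
  fixes x f :: "int ^ 'a::finite"
  assumes le: "\<forall>i. x$i \<le> f$i" and out: "\<forall>i. i \<notin> A \<longrightarrow> x$i = f$i"
    and s: "(\<Sum>i\<in>UNIV. x$i) = (\<Sum>i\<in>UNIV. f$i) - int t" and ne: "a \<in> A"
  shows "\<exists>q. real_vec x = real_vec f + real t *\<^sub>R q \<and> q \<in> nabla A"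
proof (cases "t = 0")
  case True
  have "(\<Sum>i\<in>UNIV. f$i - x$i) = 0" using s True by (simp add: sum_subtractf)
  then have "\<forall>i\<in>UNIV. f$i - x$i = 0" using le by (subst sum_nonneg_eq_0_iff[symmetric]) auto
  then have "x = f" by (simp add: vec_eq_iff)
  moreover have "- axis a 1 \<in> nabla A" unfolding nabla_def using ne by (intro hull_inc) auto
  ultimately show ?thesis using True by auto
next
  case False
  define q where "q = (1 / real t) *\<^sub>R (real_vec x - real_vec f)"
  have qc: "q$j = (real_of_int (x$j) - real_of_int (f$j)) / real t" for j
    by (simp add: q_def real_vec_comp)
  have "q \<in> nabla A"
  proof -
    have "q$j \<le> 0" for j
    proof -
      have "real_of_int (x$j) - real_of_int (f$j) \<le> 0" using le[rule_format, of j] by simp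
      then show ?thesis using qc[of j] by (simp add: divide_nonpos_nonneg)
    qed
    moreover have "q$j = 0" if "j \<notin> A" for j using out that qc[of j] by simp
    moreover have "(\<Sum>j\<in>UNIV. q$j) = -1"
    proof -
      have "(\<Sum>j\<in>UNIV. q$j) = (real_of_int (\<Sum>j\<in>UNIV. x$j) - real_of_int (\<Sum>j\<in>UNIV. f$j)) / real t"
        by (simp add: qc sum_divide_distrib[symmetric] sum_subtractf)
      also have "\<dots> = -1" using s False by simp
      finally show ?thesis .
    qed
    ultimately show ?thesis using nabla_char[of A] by auto
  qed
  moreover have "real_vec x = real_vec f + real t *\<^sub>R q"
    using False by (simp add: q_def)
  ultimately show ?thesis by blast
qed

theorem mainTheorem15:
  fixes r :: "'a::{finite,linorder} set \<Rightarrow> int" and t :: nat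
  assumes "polymatroid r"
  shows "(\<forall>f g. is_base r f \<and> is_base r g \<and> f \<noteq> g \<longrightarrow>
            {x. real_vec x \<in> {real_vec f + real t *\<^sub>R q | q. q \<in> nabla (active_set r f)}} \<inter>
            {x. real_vec x \<in> {real_vec g + real t *\<^sub>R q | q. q \<in> nabla (active_set r g)}} = {})
       \<and> (\<Union>f\<in>{f. is_base r f}.
            {x. real_vec x \<in> {real_vec f + real t *\<^sub>R q | q. q \<in> nabla (active_set r f)}})
         = {x. real_vec x \<in> {p + real t *\<^sub>R q | p q. p \<in> base_polytope r \<and> q \<in> nabla UNIV}}"
proof -
  note P = assms
  define a0 :: 'a where "a0 = Min UNIV"
  have a0: "\<not> v < a0" for v unfolding a0_def using Min_le[OF finite, of v UNIV] by auto
  have act: "a0 \<in> active_set r f" for f by (simp add: active_set_def internally_active_def a0)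
  have La: "good r x f \<and> (\<Sum>i\<in>UNIV. x$i) = r UNIV - int t"
    if q: "\<exists>q. real_vec x = real_vec f + real t *\<^sub>R q \<and> q \<in> nabla (active_set r f)" and f: "is_base r f"
    for x f
  proof -
    obtain q where "real_vec x = real_vec f + real t *\<^sub>R q" "q \<in> nabla (active_set r f)" using q by blast
    from shift_D[OF this(2,1)] f show ?thesis
      by (auto simp: good_def is_base_def intro: ccontr)
  qed
  have Lb: "\<exists>q. real_vec x = real_vec f + real t *\<^sub>R q \<and> q \<in> nabla (active_set r f)"
    if g: "good r x f" and s: "(\<Sum>i\<in>UNIV. x$i) = r UNIV - int t" for x f
  proof (rule shift_I[OF _ _ _ act])
    show "\<forall>i. x$i \<le> f$i" using g by (simp add: good_def)
    show "\<forall>i. i \<notin> active_set r f \<longrightarrow> x$i = f$i"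
    proof (intro allI impI)
      fix i assume "i \<notin> active_set r f"
      moreover have "x$i \<le> f$i" "x$i < f$i \<longrightarrow> i \<in> active_set r f" using g by (auto simp: good_def)
      ultimately show "x$i = f$i" by linarith
    qed
    show "(\<Sum>i\<in>UNIV. x$i) = (\<Sum>i\<in>UNIV. f$i) - int t" using g s by (simp add: good_def is_base_def)
  qed
  have Rc: "feas r x \<and> (\<Sum>i\<in>UNIV. x$i) = r UNIV - int t"
    if ex: "\<exists>p q. real_vec x = p + real t *\<^sub>R q \<and> p \<in> base_polytope r \<and> q \<in> nabla UNIV" for x
  proof -
    obtain p q where e: "real_vec x = p + real t *\<^sub>R q" and p: "p \<in> base_polytope r" and q: "q \<in> nabla UNIV"
      using ex by blast
    have pc: "(\<forall>S. (\<Sum>i\<in>S. p$i) \<le> real_of_int (r S)) \<and> (\<Sum>i\<in>UNIV. p$i) = real_of_int (r UNIV)"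
      using bp_char[OF p] .
    have qc: "(\<forall>j. q$j \<le> 0) \<and> (\<Sum>j\<in>UNIV. q$j) = -1" using q nabla_char[of UNIV] by auto
    have c: "real_of_int (x$i) = p$i + real t * q$i" for i
      using arg_cong[OF e, of "\<lambda>v. v $ i"] by (simp add: real_vec_comp)
    have ss: "real_of_int (\<Sum>i\<in>S. x$i) = (\<Sum>i\<in>S. p$i) + real t * (\<Sum>i\<in>S. q$i)" for S
      by (simp add: c sum.distrib sum_distrib_left)
    have "(\<Sum>i\<in>S. x$i) \<le> r S" for S
    proof -
      have "(\<Sum>i\<in>S. q$i) \<le> 0" using qc by (simp add: sum_nonpos)
      then have "real t * (\<Sum>i\<in>S. q$i) \<le> 0" by (simp add: mult_nonneg_nonpos)
      then have "real_of_int (\<Sum>i\<in>S. x$i) \<le> real_of_int (r S)" using ss[of S] pc[THEN conjunct1, rule_format, of S] by linarith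
      then show ?thesis by (simp only: of_int_le_iff)
    qed
    moreover have "real_of_int (\<Sum>i\<in>UNIV. x$i) = real_of_int (r UNIV - int t)"
      using ss[of UNIV] pc qc by simp
    ultimately show ?thesis unfolding feas_def by (simp only: of_int_eq_iff) blast
  qed
  have Rd: "\<exists>p q. real_vec x = p + real t *\<^sub>R q \<and> p \<in> base_polytope r \<and> q \<in> nabla UNIV"
    if F: "feas r x" and s: "(\<Sum>i\<in>UNIV. x$i) = r UNIV - int t" for x
  proof -
    obtain f where f: "is_base r f" "\<forall>i. x$i \<le> f$i" using greedy[OF P, of t] F s by blast
    have "\<exists>q. real_vec x = real_vec f + real t *\<^sub>R q \<and> q \<in> nabla UNIV"
      by (rule shift_I[where a=a0]) (use f s in \<open>auto simp: is_base_def\<close>)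
    moreover have "real_vec f \<in> base_polytope r" unfolding base_polytope_def using f(1)
      by (intro hull_inc) auto
    ultimately show ?thesis by blast
  qed
  have Re: "feas r x" if g: "good r x f" for x f
    unfolding feas_def
  proof
    fix S
    have "(\<Sum>i\<in>S. x$i) \<le> (\<Sum>i\<in>S. f$i)" using g by (intro sum_mono) (simp add: good_def)
    also have "\<dots> \<le> r S" using g by (simp add: good_def is_base_def)
    finally show "(\<Sum>i\<in>S. x$i) \<le> r S" .
  qed
  have part1: "\<forall>f g. is_base r f \<and> is_base r g \<and> f \<noteq> g \<longrightarrow>
            {x. real_vec x \<in> {real_vec f + real t *\<^sub>R q | q. q \<in> nabla (active_set r f)}} \<inter>
            {x. real_vec x \<in> {real_vec g + real t *\<^sub>R q | q. q \<in> nabla (active_set r g)}} = {}"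
  proof (intro allI impI)
    fix f g assume fg: "is_base r f \<and> is_base r g \<and> f \<noteq> g"
    show "{x. real_vec x \<in> {real_vec f + real t *\<^sub>R q | q. q \<in> nabla (active_set r f)}} \<inter>
            {x. real_vec x \<in> {real_vec g + real t *\<^sub>R q | q. q \<in> nabla (active_set r g)}} = {}"
    proof (rule ccontr)
      assume "\<not> ?thesis"
      then obtain x where "\<exists>q. real_vec x = real_vec f + real t *\<^sub>R q \<and> q \<in> nabla (active_set r f)"
        "\<exists>q. real_vec x = real_vec g + real t *\<^sub>R q \<and> q \<in> nabla (active_set r g)" by auto
      then have "good r x f" "good r x g" using La fg by blast+
      then have "f = g" by (rule good_unique[OF P])
      then show False using fg by simp
    qed
  qed
  have part2: "(\<Union>f\<in>{f. is_base r f}.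
            {x. real_vec x \<in> {real_vec f + real t *\<^sub>R q | q. q \<in> nabla (active_set r f)}})
         = {x. real_vec x \<in> {p + real t *\<^sub>R q | p q. p \<in> base_polytope r \<and> q \<in> nabla UNIV}}"
  proof (rule set_eqI, rule iffI)
    fix x assume "x \<in> (\<Union>f\<in>{f. is_base r f}.
            {x. real_vec x \<in> {real_vec f + real t *\<^sub>R q | q. q \<in> nabla (active_set r f)}})"
    then obtain f where f: "is_base r f" "\<exists>q. real_vec x = real_vec f + real t *\<^sub>R q \<and> q \<in> nabla (active_set r f)"
      by auto
    have "good r x f \<and> (\<Sum>i\<in>UNIV. x$i) = r UNIV - int t" using La f by blast
    then have "\<exists>p q. real_vec x = p + real t *\<^sub>R q \<and> p \<in> base_polytope r \<and> q \<in> nabla UNIV"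
      using Re Rd by blast
    then show "x \<in> {x. real_vec x \<in> {p + real t *\<^sub>R q | p q. p \<in> base_polytope r \<and> q \<in> nabla UNIV}}"
      by auto
  next
    fix x assume "x \<in> {x. real_vec x \<in> {p + real t *\<^sub>R q | p q. p \<in> base_polytope r \<and> q \<in> nabla UNIV}}"
    then have "\<exists>p q. real_vec x = p + real t *\<^sub>R q \<and> p \<in> base_polytope r \<and> q \<in> nabla UNIV" by auto
    then have xs: "feas r x" "(\<Sum>i\<in>UNIV. x$i) = r UNIV - int t" using Rc by blast+
    obtain f where f: "good r x f" using exists_good[OF P xs] by blast
    have "\<exists>q. real_vec x = real_vec f + real t *\<^sub>R q \<and> q \<in> nabla (active_set r f)" using Lb[OF f xs(2)] .
    moreover have "is_base r f" using f by (simp add: good_def)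
    ultimately show "x \<in> (\<Union>f\<in>{f. is_base r f}.
            {x. real_vec x \<in> {real_vec f + real t *\<^sub>R q | q. q \<in> nabla (active_set r f)}})" by auto
  qed
  show ?thesis using part1 part2 by blast
qed

end
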